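(* Let $\varphi$ be an almost identity PC-map of $\mathrm{UT}(n,F)$ and let $k$ be a positive integer with $k\le n-3$. If conditions $X_k$ and $Z_k$ hold for $\varphi$, then condition $X_{k+1}$ holds for $\varphi$.
   Context: $F$ is a field and $n\in\mathbb N\cup\{\infty\}$. $\mathrm{UT}(n,F)$ is the group of upper unitriangular $n\times n$ matrices over $F$ (for $n=\infty$: all $\mathbb N\times\mathbb N$ matrices with $1$ on the diagonal and $0$ below it). Convention: $\infty+m=\infty$ for $m\in\mathbb Z$. $e$ is the identity matrix, $e_{ij}$ the matrix unit, $t_{ij}(\alpha)=e+\alpha e_{ij}$ ($i<j$). $[x,y]=xyx^{-1}y^{-1}$. A PC-map is a bijection $\varphi$ of the group with $\varphi([x,y])=[\varphi(x),\varphi(y)]$ for all $x,y$; it is almost identity if $\varphi(t_{ij}(\alpha))=t_{ij}(\alpha)$ for all $i<j$, $\alpha\in F$. Conditions: $X_k$ ($k\le n-2$): $\varphi(a)_{1i}=a_{1i}$ for all $a\in\mathrm{UT}(n,F)$ and all $i=2,\dots,k$. $Z_k$ ($k\le n-3$): for all $\gamma_1,\dots,\gamma_k\in F$, the matrix $z=\prod_{i=1}^{k}t_{i\,k+3}(\gamma_i)$ satisfies $\varphi(z)=z$. *)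

theory Defs
  imports "HOL-Algebra.Group" "HOL-Library.Extended_Nat"
begin

text \<open>Matrices are functions nat => nat => 'a, indices are 1-based and range over
  {i. 1 <= i and enat i <= n}, where n :: enat (n = infinity allowed).
  Entries outside the index range are 0.\<close>

definition idx :: "enat \<Rightarrow> nat \<Rightarrow> bool" where
  "idx n i \<longleftrightarrow> 1 \<le> i \<and> enat i \<le> n"

definition UT_carrier :: "enat \<Rightarrow> (nat \<Rightarrow> nat \<Rightarrow> 'a::field) set" where
  "UT_carrier n = {a. \<forall>i j.
      (idx n i \<and> idx n j \<longrightarrow> (j < i \<longrightarrow> a i j = 0) \<and> (i = j \<longrightarrow> a i j = 1))
    \<and> (\<not> (idx n i \<and> idx n j) \<longrightarrow> a i j = 0)}"

text \<open>Matrix product of upper triangular matrices: only k with i <= k <= j contribute.\<close>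
definition ut_mult :: "(nat \<Rightarrow> nat \<Rightarrow> 'a::field) \<Rightarrow> (nat \<Rightarrow> nat \<Rightarrow> 'a) \<Rightarrow> (nat \<Rightarrow> nat \<Rightarrow> 'a)" where
  "ut_mult a b = (\<lambda>i j. \<Sum>k\<in>{i..j}. a i k * b k j)"

definition ut_one :: "enat \<Rightarrow> (nat \<Rightarrow> nat \<Rightarrow> 'a::field)" where
  "ut_one n = (\<lambda>i j. if i = j \<and> idx n i then 1 else 0)"

definition UT :: "enat \<Rightarrow> (nat \<Rightarrow> nat \<Rightarrow> 'a::field) monoid" where
  "UT n = \<lparr>carrier = UT_carrier n, mult = ut_mult, one = ut_one n\<rparr>"

definition transv :: "enat \<Rightarrow> nat \<Rightarrow> nat \<Rightarrow> 'a::field \<Rightarrow> (nat \<Rightarrow> nat \<Rightarrow> 'a)" where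
  "transv n i j \<alpha> = (\<lambda>p q. ut_one n p q + (if p = i \<and> q = j then \<alpha> else 0))"

definition ut_comm :: "enat \<Rightarrow> (nat \<Rightarrow> nat \<Rightarrow> 'a::field) \<Rightarrow> (nat \<Rightarrow> nat \<Rightarrow> 'a) \<Rightarrow> (nat \<Rightarrow> nat \<Rightarrow> 'a)" where
  "ut_comm n x y = x \<otimes>\<^bsub>UT n\<^esub> y \<otimes>\<^bsub>UT n\<^esub> inv\<^bsub>UT n\<^esub> x \<otimes>\<^bsub>UT n\<^esub> inv\<^bsub>UT n\<^esub> y"

definition PC_map :: "enat \<Rightarrow> ((nat \<Rightarrow> nat \<Rightarrow> 'a::field) \<Rightarrow> (nat \<Rightarrow> nat \<Rightarrow> 'a)) \<Rightarrow> bool" where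
  "PC_map n \<phi> \<longleftrightarrow> bij_betw \<phi> (UT_carrier n) (UT_carrier n) \<and>
     (\<forall>x\<in>UT_carrier n. \<forall>y\<in>UT_carrier n. \<phi> (ut_comm n x y) = ut_comm n (\<phi> x) (\<phi> y))"

definition almost_identity :: "enat \<Rightarrow> ((nat \<Rightarrow> nat \<Rightarrow> 'a::field) \<Rightarrow> (nat \<Rightarrow> nat \<Rightarrow> 'a)) \<Rightarrow> bool" where
  "almost_identity n \<phi> \<longleftrightarrow>
     (\<forall>i j \<alpha>. 1 \<le> i \<and> i < j \<and> enat j \<le> n \<longrightarrow> \<phi> (transv n i j \<alpha>) = transv n i j \<alpha>)"

definition cond_X :: "enat \<Rightarrow> nat \<Rightarrow> ((nat \<Rightarrow> nat \<Rightarrow> 'a::field) \<Rightarrow> (nat \<Rightarrow> nat \<Rightarrow> 'a)) \<Rightarrow> bool" where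
  "cond_X n k \<phi> \<longleftrightarrow> (\<forall>a\<in>UT_carrier n. \<forall>i\<in>{2..k}. \<phi> a 1 i = a 1 i)"

definition z_mat :: "enat \<Rightarrow> nat \<Rightarrow> (nat \<Rightarrow> 'a::field) \<Rightarrow> (nat \<Rightarrow> nat \<Rightarrow> 'a)" where
  "z_mat n k \<gamma> = foldr (\<lambda>i acc. transv n i (k + 3) (\<gamma> i) \<otimes>\<^bsub>UT n\<^esub> acc) [1..<k+1] (ut_one n)"

definition cond_Z :: "enat \<Rightarrow> nat \<Rightarrow> ((nat \<Rightarrow> nat \<Rightarrow> 'a::field) \<Rightarrow> (nat \<Rightarrow> nat \<Rightarrow> 'a)) \<Rightarrow> bool" where
  "cond_Z n k \<phi> \<longleftrightarrow> (\<forall>\<gamma>. \<phi> (z_mat n k \<gamma>) = z_mat n k \<gamma>)"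

end

theory Submission
  imports Defs
begin

lemma idx_le: "idx n j \<Longrightarrow> 1 \<le> i \<Longrightarrow> i \<le> j \<Longrightarrow> idx n i"
  unfolding idx_def using order.trans[of "enat i" "enat j" n] by simp

lemma not_idx0[simp]: "\<not> idx n 0" by (simp add: idx_def)

lemma UTc_out1: "a \<in> UT_carrier n \<Longrightarrow> \<not> idx n i \<Longrightarrow> a i j = 0"
  unfolding UT_carrier_def by blast
lemma UTc_out2: "a \<in> UT_carrier n \<Longrightarrow> \<not> idx n j \<Longrightarrow> a i j = 0"
  unfolding UT_carrier_def by blast
lemma UTc_low: "a \<in> UT_carrier n \<Longrightarrow> j < i \<Longrightarrow> a i j = 0"
  unfolding UT_carrier_def by blast
lemma UTc_diag: "a \<in> UT_carrier n \<Longrightarrow> idx n i \<Longrightarrow> a i i = 1"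
  unfolding UT_carrier_def by blast

lemma UTcI:
  assumes "\<And>i j. \<not> idx n i \<Longrightarrow> a i j = 0" "\<And>i j. \<not> idx n j \<Longrightarrow> a i j = 0"
    "\<And>i j. j < i \<Longrightarrow> a i j = 0" "\<And>i. idx n i \<Longrightarrow> a i i = 1"
  shows "a \<in> UT_carrier n"
  unfolding UT_carrier_def using assms by blast

lemma ut_one_carrier: "ut_one n \<in> UT_carrier n"
  by (rule UTcI) (auto simp: ut_one_def)

lemma ut_mult_closed:
  assumes a: "a \<in> UT_carrier n" and b: "b \<in> UT_carrier n"
  shows "ut_mult a b \<in> UT_carrier n"
proof (rule UTcI)
  fix i j assume "\<not> idx n i" thus "ut_mult a b i j = 0"
    using UTc_out1[OF a] by (simp add: ut_mult_def)
next
  fix i j assume "\<not> idx n j" thus "ut_mult a b i j = 0"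
    using UTc_out2[OF b] by (simp add: ut_mult_def)
next
  fix i j :: nat assume "j < i" thus "ut_mult a b i j = 0"
    by (simp add: ut_mult_def)
next
  fix i assume "idx n i" thus "ut_mult a b i i = 1"
    using UTc_diag[OF a] UTc_diag[OF b] by (simp add: ut_mult_def)
qed

lemma ut_mult_assoc: "ut_mult (ut_mult a b) c = ut_mult a (ut_mult b c)"
proof (intro ext)
  fix i j
  have "ut_mult (ut_mult a b) c i j = (\<Sum>k\<in>{i..j}. \<Sum>l\<in>{l. l \<in> {i..j} \<and> l \<le> k}. a i l * b l k * c k j)"
    unfolding ut_mult_def sum_distrib_right
    by (intro sum.cong refl) (auto intro: sum.cong)
  also have "\<dots> = (\<Sum>l\<in>{i..j}. \<Sum>k\<in>{k. k \<in> {i..j} \<and> l \<le> k}. a i l * b l k * c k j)"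
    by (rule sum.swap_restrict[symmetric]) auto
  also have "\<dots> = ut_mult a (ut_mult b c) i j"
    unfolding ut_mult_def sum_distrib_left
    by (intro sum.cong refl) (auto simp: mult.assoc intro: sum.cong)
  finally show "ut_mult (ut_mult a b) c i j = ut_mult a (ut_mult b c) i j" .
qed

lemma ut_one_mult: "a \<in> UT_carrier n \<Longrightarrow> ut_mult (ut_one n) a = a"
proof (intro ext)
  fix i j assume a: "a \<in> UT_carrier n"
  have "ut_mult (ut_one n) a i j = (\<Sum>k\<in>{i..j}. if k = i then (if idx n i then a k j else 0) else 0)"
    unfolding ut_mult_def ut_one_def by (intro sum.cong) auto
  also have "\<dots> = a i j"
    using UTc_out1[OF a] UTc_low[OF a] by (auto simp: sum.delta)
  finally show "ut_mult (ut_one n) a i j = a i j" .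
qed


fun lrow :: "(nat \<Rightarrow> nat \<Rightarrow> 'a::field) \<Rightarrow> nat \<Rightarrow> nat \<Rightarrow> (nat \<Rightarrow> 'a)" where
  "lrow a i 0 = (\<lambda>l. if l = 0 then 1 else 0)"
| "lrow a i (Suc d) = (lrow a i d)(Suc d := - (\<Sum>l<Suc d. lrow a i d l * a (i+l) (i + Suc d)))"

lemma lrow_stable: "l \<le> d \<Longrightarrow> lrow a i d l = lrow a i l l"
proof (induction d)
  case 0 then show ?case by simp
next
  case (Suc d)
  show ?case
  proof (cases "l = Suc d")
    case False
    then have "l \<le> d" using Suc.prems by simp
    then have "lrow a i d l = lrow a i l l" by (rule Suc.IH)
    then show ?thesis using False by (simp del: lrow.simps add: lrow.simps(2))
  qed simp
qed

lemma lrow_rec: "lrow a i (Suc d) (Suc d) = - (\<Sum>l<Suc d. lrow a i l l * a (i+l) (i + Suc d))"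
proof -
  have "\<And>l. l < Suc d \<Longrightarrow> lrow a i d l = lrow a i l l" by (rule lrow_stable) simp
  then show ?thesis by (simp only: lrow.simps(2) fun_upd_same) (intro arg_cong[where f=uminus] sum.cong, auto)
qed

definition linv :: "enat \<Rightarrow> (nat \<Rightarrow> nat \<Rightarrow> 'a::field) \<Rightarrow> (nat \<Rightarrow> nat \<Rightarrow> 'a)" where
  "linv n a = (\<lambda>i j. if idx n i \<and> idx n j \<and> i \<le> j then lrow a i (j-i) (j-i) else 0)"

lemma linv_carrier: "linv n a \<in> UT_carrier n"
  by (rule UTcI) (auto simp: linv_def)

lemma linv_mult:
  assumes a: "a \<in> UT_carrier n"
  shows "ut_mult (linv n a) a = ut_one n"
proof (intro ext)
  fix i j
  show "ut_mult (linv n a) a i j = ut_one n i j"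
  proof (cases "idx n i \<and> idx n j \<and> i < j")
    case True
    then have ii: "idx n i" "idx n j" "i < j" by auto
    then obtain d where d: "j - i = Suc d" by (metis Suc_diff_Suc)
    have j: "j = i + Suc d" using d ii by simp
    have idxl: "idx n (i+l)" if "l < Suc d" for l
      by (rule idx_le[OF ii(2)]) (use ii that in \<open>auto simp: idx_def j\<close>)
    have e1: "ut_mult (linv n a) a i j = (\<Sum>k\<in>{i..<j}. linv n a i k * a k j) + linv n a i j * a j j"
      unfolding ut_mult_def using ii by (simp add: atLeastLessThanSuc_atLeastAtMost[symmetric])
    have e2: "(\<Sum>k\<in>{i..<j}. linv n a i k * a k j) = (\<Sum>l\<in>{0..<Suc d}. linv n a i (i+l) * a (i+l) j)"
      by (subst sum.atLeastLessThan_shift_0) (simp add: d comp_def)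
    have e3: "(\<Sum>l\<in>{0..<Suc d}. linv n a i (i+l) * a (i+l) j) = (\<Sum>l<Suc d. lrow a i l l * a (i+l) (i + Suc d))"
      unfolding atLeast0LessThan using ii idxl by (intro sum.cong) (auto simp: linv_def j)
    have e4: "linv n a i j * a j j = - (\<Sum>l<Suc d. lrow a i l l * a (i+l) (i + Suc d))"
      using ii UTc_diag[OF a ii(2)] by (simp add: linv_def d j lrow_rec del: lrow.simps)
    show ?thesis using ii e1 e2 e3 e4 by (simp add: ut_one_def)
  next
    case False
    then consider "\<not> idx n i" | "\<not> idx n j" | "j < i" | "i = j" "idx n i" by linarith
    then show ?thesis
    proof cases
      case 1 then show ?thesis by (simp add: ut_mult_def ut_one_def linv_def)
    next
      case 2 then show ?thesis using UTc_out2[OF a] by (simp add: ut_mult_def ut_one_def)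
    next
      case 3 then show ?thesis by (simp add: ut_mult_def ut_one_def)
    next
      case 4 then show ?thesis using UTc_diag[OF a] by (simp add: ut_mult_def ut_one_def linv_def)
    qed
  qed
qed

lemma UT_group: "group (UT n :: (nat \<Rightarrow> nat \<Rightarrow> 'a::field) monoid)"
proof (rule groupI)
  fix x :: "nat \<Rightarrow> nat \<Rightarrow> 'a" assume "x \<in> carrier (UT n)"
  then show "\<exists>y\<in>carrier (UT n). y \<otimes>\<^bsub>UT n\<^esub> x = \<one>\<^bsub>UT n\<^esub>"
    using linv_mult[of x n] linv_carrier[of n x] by (auto simp: UT_def)
qed (auto simp: UT_def ut_mult_closed ut_one_carrier ut_mult_assoc ut_one_mult)

lemma UT_simps: "carrier (UT n) = UT_carrier n" "mult (UT n) = ut_mult" "one (UT n) = ut_one n"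
  by (simp_all add: UT_def)


lemma transv_carrier:
  assumes "1 \<le> j" "j < m" "idx n m"
  shows "transv n j m \<delta> \<in> UT_carrier n"
proof -
  have "idx n j" using idx_le[OF assms(3) assms(1)] assms(2) by simp
  show ?thesis
  proof (rule UTcI)
    fix i k :: nat assume "\<not> idx n i" then show "transv n j m \<delta> i k = 0"
      using \<open>idx n j\<close> by (auto simp: transv_def ut_one_def)
  next
    fix i k :: nat assume "\<not> idx n k" then show "transv n j m \<delta> i k = 0"
      using assms by (auto simp: transv_def ut_one_def)
  next
    fix i k :: nat assume "k < i" then show "transv n j m \<delta> i k = 0"
      using assms by (auto simp: transv_def ut_one_def)
  next
    fix i :: nat assume "idx n i" then show "transv n j m \<delta> i i = 1"
      using assms by (auto simp: transv_def ut_one_def)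
  qed
qed

lemma mult_transv_right:
  assumes M: "M \<in> UT_carrier n" and jm: "1 \<le> j" "j < m" "idx n m"
  shows "ut_mult M (transv n j m \<delta>) = (\<lambda>p q. M p q + (if q = m then \<delta> * M p j else 0))"
proof (intro ext)
  fix p q
  have "ut_mult M (transv n j m \<delta>) p q =
     (\<Sum>l\<in>{p..q}. if l = q then (if idx n q then M p q else 0) else 0)
   + (\<Sum>l\<in>{p..q}. if l = j then (if q = m then M p j * \<delta> else 0) else 0)"
    unfolding ut_mult_def transv_def ut_one_def distrib_left sum.distrib
    by (intro arg_cong2[where f="(+)"] sum.cong) auto
  also have "\<dots> = M p q + (if q = m then \<delta> * M p j else 0)"
    using UTc_out2[OF M, of q p] UTc_low[OF M, of q p] UTc_low[OF M, of j p] jm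
    by (auto simp: sum.delta)
  finally show "ut_mult M (transv n j m \<delta>) p q = M p q + (if q = m then \<delta> * M p j else 0)" .
qed

lemma mult_transv_left:
  assumes M: "M \<in> UT_carrier n" and jm: "1 \<le> j" "j < m" "idx n m"
  shows "ut_mult (transv n j m \<delta>) M = (\<lambda>p q. M p q + (if p = j then \<delta> * M m q else 0))"
proof (intro ext)
  fix p q
  have "ut_mult (transv n j m \<delta>) M p q =
     (\<Sum>l\<in>{p..q}. if l = p then (if idx n p then M p q else 0) else 0)
   + (\<Sum>l\<in>{p..q}. if l = m then (if p = j then \<delta> * M m q else 0) else 0)"
    unfolding ut_mult_def transv_def ut_one_def distrib_right sum.distrib
    by (intro arg_cong2[where f="(+)"] sum.cong) auto
  also have "\<dots> = M p q + (if p = j then \<delta> * M m q else 0)"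
    using UTc_out1[OF M, of p q] UTc_low[OF M, of q p] UTc_low[OF M, of q m] jm
    by (auto simp: sum.delta)
  finally show "ut_mult (transv n j m \<delta>) M p q = M p q + (if p = j then \<delta> * M m q else 0)" .
qed

lemma mult_col_update:
  "ut_mult (\<lambda>p l. A p l + (if l = m then f p else 0)) B
   = (\<lambda>p q. ut_mult A B p q + (if m \<in> {p..q} then f p * B m q else 0))"
proof (intro ext)
  fix p q
  have "(\<Sum>l\<in>{p..q}. (if l = m then f p else 0) * B l q) = (\<Sum>l\<in>{p..q}. if l = m then f p * B m q else 0)"
    by (intro sum.cong) auto
  then show "ut_mult (\<lambda>p l. A p l + (if l = m then f p else 0)) B p q
   = ut_mult A B p q + (if m \<in> {p..q} then f p * B m q else 0)"
    unfolding ut_mult_def distrib_right sum.distrib by (simp add: sum.delta)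
qed

lemma conj_transv:
  assumes a: "a \<in> UT_carrier n" and b: "b \<in> UT_carrier n" and ab: "ut_mult a b = ut_one n"
    and jm: "1 \<le> j" "j < m" "idx n m"
  shows "ut_mult (ut_mult a (transv n j m \<gamma>)) b = (\<lambda>p q. ut_one n p q + \<gamma> * a p j * b m q)"
proof -
  have "ut_mult (ut_mult a (transv n j m \<gamma>)) b
      = (\<lambda>p q. ut_mult a b p q + (if m \<in> {p..q} then \<gamma> * a p j * b m q else 0))"
    unfolding mult_transv_right[OF a jm] mult_col_update by simp
  also have "\<dots> = (\<lambda>p q. ut_one n p q + \<gamma> * a p j * b m q)"
  proof (intro ext)
    fix p q
    show "ut_mult a b p q + (if m \<in> {p..q} then \<gamma> * a p j * b m q else 0) = ut_one n p q + \<gamma> * a p j * b m q"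
      using UTc_low[OF a, of j p] UTc_low[OF b, of q m] jm ab by (cases "m < p") auto
  qed
  finally show ?thesis .
qed

lemma transv_inv:
  fixes \<gamma> :: "'a::field"
  assumes jm: "1 \<le> j" "j < m" "idx n m"
  shows "inv\<^bsub>UT n\<^esub> (transv n j m \<gamma>) = transv n j m (-\<gamma>)"
proof -
  interpret G: group "UT n :: (nat \<Rightarrow> nat \<Rightarrow> 'a) monoid" by (rule UT_group)
  have "ut_mult (transv n j m (-\<gamma>)) (transv n j m \<gamma>) = (ut_one n :: nat \<Rightarrow> nat \<Rightarrow> 'a)"
    unfolding mult_transv_left[OF transv_carrier[OF jm] jm]
    using jm by (intro ext) (auto simp: transv_def ut_one_def)
  then show ?thesis
    by (intro G.inv_equality) (auto simp: UT_simps transv_carrier[OF jm])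
qed

lemma comm_transv:
  assumes a: "a \<in> UT_carrier n" and jm: "1 \<le> j" "j < m" "idx n m"
  shows "ut_comm n a (transv n j m \<gamma>) =
    (\<lambda>p q. ut_one n p q + \<gamma> * a p j * (inv\<^bsub>UT n\<^esub> a) m q - (if p = j \<and> q = m then \<gamma> else 0))"
proof -
  interpret G: group "UT n :: (nat \<Rightarrow> nat \<Rightarrow> 'a) monoid" by (rule UT_group)
  define b where "b = inv\<^bsub>UT n\<^esub> a"
  have b: "b \<in> UT_carrier n" using a by (simp add: b_def UT_simps[symmetric])
  have ab: "ut_mult a b = ut_one n" using a G.r_inv[of a] by (simp add: b_def UT_simps)
  have idxj: "idx n j" using idx_le[OF jm(3) jm(1)] jm(2) by simp
  let ?M = "\<lambda>p q. ut_one n p q + \<gamma> * a p j * b m q"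
  have M: "?M \<in> UT_carrier n"
    using conj_transv[OF a b ab jm, of \<gamma>, symmetric] ut_mult_closed[OF ut_mult_closed[OF a transv_carrier[OF jm]] b]
    by simp
  have "ut_comm n a (transv n j m \<gamma>) = ut_mult ?M (transv n j m (-\<gamma>))"
    unfolding ut_comm_def transv_inv[OF jm] using conj_transv[OF a b ab jm, of \<gamma>]
    by (simp add: UT_simps b_def)
  also have "\<dots> = (\<lambda>p q. ut_one n p q + \<gamma> * a p j * b m q - (if p = j \<and> q = m then \<gamma> else 0))"
    unfolding mult_transv_right[OF M jm]
    using UTc_low[OF b, of j m] jm idxj by (intro ext) (auto simp: ut_one_def)
  finally show ?thesis by (simp add: b_def)
qed

lemma comm_inv_row:
  assumes a: "a \<in> UT_carrier n" and jm: "1 \<le> j" "j < m" "idx n m" and r: "j < r"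
  shows "(inv\<^bsub>UT n\<^esub> (ut_comm n a (transv n j m \<gamma>))) r q = ut_one n r q"
proof -
  interpret G: group "UT n :: (nat \<Rightarrow> nat \<Rightarrow> 'a) monoid" by (rule UT_group)
  define b where "b = inv\<^bsub>UT n\<^esub> a"
  have b: "b \<in> UT_carrier n" using a by (simp add: b_def UT_simps[symmetric])
  have ab: "ut_mult a b = ut_one n" using a G.r_inv[of a] by (simp add: b_def UT_simps)
  have t: "transv n j m \<gamma> \<in> carrier (UT n)" "transv n j m (-\<gamma>) \<in> carrier (UT n)"
    using transv_carrier[OF jm] by (auto simp: UT_simps)
  have ac: "a \<in> carrier (UT n)" using a by (simp add: UT_simps)
  have "inv\<^bsub>UT n\<^esub> (ut_comm n a (transv n j m \<gamma>))
     = transv n j m \<gamma> \<otimes>\<^bsub>UT n\<^esub> ((a \<otimes>\<^bsub>UT n\<^esub> transv n j m (-\<gamma>)) \<otimes>\<^bsub>UT n\<^esub> b)"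
    unfolding ut_comm_def b_def using t ac
    by (simp add: G.inv_mult_group G.m_assoc transv_inv[OF jm])
  also have "\<dots> = ut_mult (transv n j m \<gamma>) (\<lambda>p q. ut_one n p q + (-\<gamma>) * a p j * b m q)"
    by (simp add: UT_simps conj_transv[OF a b ab jm])
  also have "\<dots> = (\<lambda>p q. (ut_one n p q + (-\<gamma>) * a p j * b m q) + (if p = j then \<gamma> * (ut_one n m q + (-\<gamma>) * a m j * b m q) else 0))"
    apply (rule mult_transv_left[OF _ jm])
    using conj_transv[OF a b ab jm, of "-\<gamma>", symmetric] ut_mult_closed[OF ut_mult_closed[OF a transv_carrier[OF jm]] b]
    by simp
  finally show ?thesis using r UTc_low[OF a, of j r] by simp
qed


lemma comm_carrier:
  assumes "x \<in> UT_carrier n" "y \<in> UT_carrier n"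
  shows "ut_comm n x y \<in> UT_carrier n"
proof -
  interpret G: group "UT n :: (nat \<Rightarrow> nat \<Rightarrow> 'a::field) monoid" by (rule UT_group)
  show ?thesis using assms unfolding ut_comm_def by (simp add: UT_simps[symmetric])
qed

lemma zfold:
  fixes \<gamma> :: "nat \<Rightarrow> 'a::field"
  assumes k3: "idx n (k+3)"
  shows "1 \<le> s \<Longrightarrow> s \<le> k+1 \<Longrightarrow>
    foldr (\<lambda>i acc. transv n i (k + 3) (\<gamma> i) \<otimes>\<^bsub>UT n\<^esub> acc) [s..<k+1] (ut_one n)
      = (\<lambda>p q. ut_one n p q + (if q = k+3 \<and> s \<le> p \<and> p \<le> k then \<gamma> p else 0))
    \<and> foldr (\<lambda>i acc. transv n i (k + 3) (\<gamma> i) \<otimes>\<^bsub>UT n\<^esub> acc) [s..<k+1] (ut_one n) \<in> UT_carrier n"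
proof (induction "k+1-s" arbitrary: s)
  case 0
  then have "s = k+1" by simp
  then show ?case by (auto simp: ut_one_carrier fun_eq_iff)
next
  case (Suc d)
  then have sk: "s \<le> k" by simp
  have L: "[s..<k+1] = s # [Suc s..<k+1]" using sk by (simp add: upt_conv_Cons)
  define R where "R = foldr (\<lambda>i acc. transv n i (k + 3) (\<gamma> i) \<otimes>\<^bsub>UT n\<^esub> acc) [Suc s..<k+1] (ut_one n)"
  have IH: "R = (\<lambda>p q. ut_one n p q + (if q = k+3 \<and> Suc s \<le> p \<and> p \<le> k then \<gamma> p else 0))"
     "R \<in> UT_carrier n"
  proof -
    have hd: "d = k + 1 - Suc s" using Suc.hyps(2) by simp
    have "1 \<le> Suc s" "Suc s \<le> k + 1" using sk by auto
    note H = Suc.hyps(1)[OF hd this, folded R_def]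
    show "R = (\<lambda>p q. ut_one n p q + (if q = k+3 \<and> Suc s \<le> p \<and> p \<le> k then \<gamma> p else 0))"
      by (rule conjunct1[OF H])
    show "R \<in> UT_carrier n" by (rule conjunct2[OF H])
  qed
  have jm: "1 \<le> s" "s < k+3" "idx n (k+3)" using Suc.prems k3 by auto
  have eq: "foldr (\<lambda>i acc. transv n i (k + 3) (\<gamma> i) \<otimes>\<^bsub>UT n\<^esub> acc) [s..<k+1] (ut_one n)
     = ut_mult (transv n s (k+3) (\<gamma> s)) R"
    unfolding L R_def by (simp add: UT_simps)
  show ?case
  proof
    show "foldr (\<lambda>i acc. transv n i (k + 3) (\<gamma> i) \<otimes>\<^bsub>UT n\<^esub> acc) [s..<k+1] (ut_one n)
      = (\<lambda>p q. ut_one n p q + (if q = k+3 \<and> s \<le> p \<and> p \<le> k then \<gamma> p else 0))"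
      unfolding eq mult_transv_left[OF IH(2) jm] unfolding IH(1)
      using k3 sk by (intro ext) (auto simp: ut_one_def)
    show "foldr (\<lambda>i acc. transv n i (k + 3) (\<gamma> i) \<otimes>\<^bsub>UT n\<^esub> acc) [s..<k+1] (ut_one n) \<in> UT_carrier n"
      unfolding eq by (rule ut_mult_closed[OF transv_carrier[OF jm] IH(2)])
  qed
qed

lemma z_mat_formula:
  assumes k3: "idx n (k+3)"
  shows "z_mat n k \<gamma> = (\<lambda>p q. ut_one n p q + (if q = k+3 \<and> 1 \<le> p \<and> p \<le> k then \<gamma> p else 0))"
  using zfold[OF k3, of 1 \<gamma>] unfolding z_mat_def by simp

lemma W_formula:
  fixes x :: "nat \<Rightarrow> nat \<Rightarrow> 'a::field"
  assumes x: "x \<in> UT_carrier n" and k3: "idx n (k+3)"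
  shows "ut_comm n (ut_comm n x (transv n (k+1) (k+2) 1)) (transv n (k+2) (k+3) 1)
     = (\<lambda>p q. ut_one n p q + (if q = k+3 \<and> 1 \<le> p \<and> p \<le> k then x p (k+1) else 0))"
proof -
  interpret G: group "UT n :: (nat \<Rightarrow> nat \<Rightarrow> 'a) monoid" by (rule UT_group)
  have k2: "idx n (k+2)" by (rule idx_le[OF k3]) auto
  have k1: "idx n (k+1)" by (rule idx_le[OF k3]) auto
  have jm1: "1 \<le> k+1" "k+1 < k+2" "idx n (k+2)" using k2 by auto
  have jm2: "1 \<le> k+2" "k+2 < k+3" "idx n (k+3)" using k3 by auto
  define c where "c = ut_comm n x (transv n (k+1) (k+2) 1)"
  have c: "c \<in> UT_carrier n" unfolding c_def by (rule comm_carrier[OF x transv_carrier[OF jm1]])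
  have ic: "(inv\<^bsub>UT n\<^esub> x) \<in> UT_carrier n" using x by (simp add: UT_simps[symmetric])
  have cf: "c p (k+2) = ut_one n p (k+2) + x p (k+1) - (if p = k+1 then 1 else 0)" for p
    unfolding c_def comm_transv[OF x jm1] using UTc_diag[OF ic k2] by simp
  have row: "(inv\<^bsub>UT n\<^esub> c) (k+3) q = ut_one n (k+3) q" for q
    unfolding c_def by (rule comm_inv_row[OF x jm1]) simp
  show ?thesis
    unfolding c_def[symmetric] comm_transv[OF c jm2]
  proof (intro ext)
    fix p q
    show "ut_one n p q + 1 * c p (k + 2) * (inv\<^bsub>UT n\<^esub> c) (k + 3) q - (if p = k + 2 \<and> q = k + 3 then 1 else 0) =
         ut_one n p q + (if q = k + 3 \<and> 1 \<le> p \<and> p \<le> k then x p (k + 1) else 0)"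
      unfolding cf row
      using UTc_diag[OF x k1] UTc_low[OF x, of "k+1" p] UTc_out1[OF x, of 0 "k+1"] k2 k3
      by (cases "p = 0") (auto simp: ut_one_def not_less_eq_eq)
  qed
qed

theorem mainTheorem4:
  fixes n :: enat and k :: nat
    and \<phi> :: "(nat \<Rightarrow> nat \<Rightarrow> 'a::field) \<Rightarrow> (nat \<Rightarrow> nat \<Rightarrow> 'a)"
  assumes "PC_map n \<phi>" and "almost_identity n \<phi>"
    and "0 < k" and "enat k + 3 \<le> n"
    and "cond_X n k \<phi>" and "cond_Z n k \<phi>"
  shows "cond_X n (k + 1) \<phi>"
  unfolding cond_X_def
proof (intro ballI)
  fix a :: "nat \<Rightarrow> nat \<Rightarrow> 'a" and i assume a: "a \<in> UT_carrier n" and i: "i \<in> {2..k+1}"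
  show "\<phi> a 1 i = a 1 i"
  proof (cases "i \<le> k")
    case True
    then show ?thesis using assms(5) a i unfolding cond_X_def by auto
  next
    case False
    then have ik: "i = k+1" using i by simp
    have "enat (k+3) = enat k + 3" by (simp add: numeral_eq_enat)
    then have k3: "idx n (k+3)" using assms(4) by (simp add: idx_def)
    have k2: "idx n (k+2)" by (rule idx_le[OF k3]) auto
    have jm1: "1 \<le> k+1" "k+1 < k+2" "idx n (k+2)" using k2 by auto
    have jm2: "1 \<le> k+2" "k+2 < k+3" "idx n (k+3)" using k3 by auto
    let ?t1 = "transv n (k+1) (k+2) (1::'a)" and ?t2 = "transv n (k+2) (k+3) (1::'a)"
    have pc: "\<And>x y. x \<in> UT_carrier n \<Longrightarrow> y \<in> UT_carrier n \<Longrightarrow> \<phi> (ut_comm n x y) = ut_comm n (\<phi> x) (\<phi> y)"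
      using assms(1) unfolding PC_map_def by blast
    have pa: "\<phi> a \<in> UT_carrier n"
      using bij_betw_apply[OF conjunct1[OF assms(1)[unfolded PC_map_def]] a] .
    have f1: "\<phi> ?t1 = ?t1" and f2: "\<phi> ?t2 = ?t2"
      using assms(2) jm1 jm2 unfolding almost_identity_def idx_def by auto
    have "\<phi> (ut_comm n (ut_comm n a ?t1) ?t2) = ut_comm n (ut_comm n (\<phi> a) ?t1) ?t2"
      using pc[OF comm_carrier[OF a transv_carrier[OF jm1]] transv_carrier[OF jm2]]
        pc[OF a transv_carrier[OF jm1]] f1 f2 by simp
    moreover have "ut_comm n (ut_comm n a ?t1) ?t2 = z_mat n k (\<lambda>p. a p (k+1))"
      unfolding W_formula[OF a k3] z_mat_formula[OF k3] ..
    moreover have "\<phi> (z_mat n k (\<lambda>p. a p (k+1))) = z_mat n k (\<lambda>p. a p (k+1))"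
      using assms(6) unfolding cond_Z_def by blast
    ultimately have "ut_comm n (ut_comm n (\<phi> a) ?t1) ?t2 = ut_comm n (ut_comm n a ?t1) ?t2" by simp
    then have "ut_comm n (ut_comm n (\<phi> a) ?t1) ?t2 1 (k+3) = ut_comm n (ut_comm n a ?t1) ?t2 1 (k+3)" by simp
    then show ?thesis unfolding W_formula[OF a k3] W_formula[OF pa k3] ik
      using assms(3) by (simp add: ut_one_def)
  qed
qed

end
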